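(* If $G$ is a graph with minimum degree $\delta=\delta(G)\ge 2$ and maximum degree $\Delta=\Delta(G)\ge 4\lfloor\delta/2\rfloor-2$, then $$\mathrm{TC}_2(G)\le \Big\lfloor\tfrac{\delta}{2}\Big\rfloor\Big(\Delta-2\Big\lfloor\tfrac{\delta}{2}\Big\rfloor+1\Big)+\Big\lceil\tfrac{\delta}{2}\Big\rceil.$$ Moreover, the bound is sharp for every even minimum degree: for every even $\delta\ge 2$ there exists a graph with minimum degree $\delta$ satisfying the hypothesis and attaining equality.
   Context: All graphs are finite, simple and connected. $N(v)$ denotes the open neighborhood of $v$. A set $S\subseteq V(G)$ is a total $2$-dominating set if $|N(v)\cap S|\ge 2$ for every $v\in V(G)$. Two disjoint sets $U,W\subseteq V(G)$ form a total $2$-coalition if neither is a total $2$-dominating set but $U\cup W$ is. A total $2$-coalition partition of $G$ is a partition $\Omega$ of $V(G)$ in which every set forms a total $2$-coalition with some other set of $\Omega$; $\mathrm{TC}_2(G)$ is the maximum cardinality of such a partition. *)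

theory Defs
  imports Main "HOL-Library.Disjoint_Sets"
begin

definition graph :: "'a set \<Rightarrow> ('a \<Rightarrow> 'a \<Rightarrow> bool) \<Rightarrow> bool" where
  "graph V E \<longleftrightarrow> finite V \<and> V \<noteq> {} \<and>
     (\<forall>u v. E u v \<longrightarrow> u \<in> V \<and> v \<in> V) \<and>
     (\<forall>u v. E u v \<longrightarrow> E v u) \<and> (\<forall>v. \<not> E v v) \<and>
     (\<forall>u\<in>V. \<forall>v\<in>V. (u, v) \<in> {(x, y). E x y}\<^sup>*)"

definition nbhd :: "('a \<Rightarrow> 'a \<Rightarrow> bool) \<Rightarrow> 'a \<Rightarrow> 'a set" where
  "nbhd E v = {u. E v u}"

definition degree :: "('a \<Rightarrow> 'a \<Rightarrow> bool) \<Rightarrow> 'a \<Rightarrow> nat" where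
  "degree E v = card (nbhd E v)"

definition min_degree :: "'a set \<Rightarrow> ('a \<Rightarrow> 'a \<Rightarrow> bool) \<Rightarrow> nat" where
  "min_degree V E = Min (degree E ` V)"

definition max_degree :: "'a set \<Rightarrow> ('a \<Rightarrow> 'a \<Rightarrow> bool) \<Rightarrow> nat" where
  "max_degree V E = Max (degree E ` V)"

definition total_2_dominating :: "'a set \<Rightarrow> ('a \<Rightarrow> 'a \<Rightarrow> bool) \<Rightarrow> 'a set \<Rightarrow> bool" where
  "total_2_dominating V E S \<longleftrightarrow> S \<subseteq> V \<and> (\<forall>v\<in>V. card (nbhd E v \<inter> S) \<ge> 2)"

definition total_2_coalition :: "'a set \<Rightarrow> ('a \<Rightarrow> 'a \<Rightarrow> bool) \<Rightarrow> 'a set \<Rightarrow> 'a set \<Rightarrow> bool" where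
  "total_2_coalition V E U W \<longleftrightarrow> U \<inter> W = {} \<and>
     \<not> total_2_dominating V E U \<and> \<not> total_2_dominating V E W \<and>
     total_2_dominating V E (U \<union> W)"

definition total_2_coalition_partition :: "'a set \<Rightarrow> ('a \<Rightarrow> 'a \<Rightarrow> bool) \<Rightarrow> 'a set set \<Rightarrow> bool" where
  "total_2_coalition_partition V E P \<longleftrightarrow> partition_on V P \<and>
     (\<forall>U\<in>P. \<exists>W\<in>P. W \<noteq> U \<and> total_2_coalition V E U W)"

text \<open>Maximum cardinality of a total 2-coalition partition (0 if none exists).\<close>
definition TC2 :: "'a set \<Rightarrow> ('a \<Rightarrow> 'a \<Rightarrow> bool) \<Rightarrow> nat" where
  "TC2 V E = Max (insert 0 {card P | P. total_2_coalition_partition V E P})"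

end

theory Submission
  imports Defs "HOL-Library.Nat_Bijection"
begin

lemma card_ge2I: "finite S \<Longrightarrow> a \<in> S \<Longrightarrow> b \<in> S \<Longrightarrow> a \<noteq> b \<Longrightarrow> 2 \<le> card S"
proof -
  assume "finite S" "a \<in> S" "b \<in> S" "a \<noteq> b"
  then have "card {a,b} \<le> card S" by (intro card_mono) auto
  then show ?thesis using \<open>a \<noteq> b\<close> by simp
qed

lemma part_sum:
  assumes "partition_on V P" "finite V" "B \<subseteq> V" "Q \<subseteq> P"
  shows "(\<Sum>S\<in>Q. card (B \<inter> S)) = card (B \<inter> \<Union>Q)"
proof -
  have fP: "finite P" using assms finite_elements by blast
  have fQ: "finite Q" using fP assms(4) finite_subset by blast
  have "card (\<Union>S\<in>Q. B \<inter> S) = (\<Sum>S\<in>Q. card (B \<inter> S))"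
  proof (rule card_UN_disjoint[OF fQ])
    show "\<forall>i\<in>Q. finite (B \<inter> i)" using assms(2,3) finite_subset by blast
    show "\<forall>i\<in>Q. \<forall>j\<in>Q. i \<noteq> j \<longrightarrow> B \<inter> i \<inter> (B \<inter> j) = {}"
      using assms(1,4) partition_onD2[OF assms(1)] unfolding disjoint_def by blast
  qed
  moreover have "(\<Union>S\<in>Q. B \<inter> S) = B \<inter> \<Union>Q" by blast
  ultimately show ?thesis by simp
qed

lemma part_sum_le:
  assumes "partition_on V P" "finite V" "B \<subseteq> V" "Q \<subseteq> P"
  shows "(\<Sum>S\<in>Q. card (B \<inter> S)) \<le> card B"
  unfolding part_sum[OF assms] using assms(2,3) finite_subset by (intro card_mono) auto

lemma part_sum_eq:
  assumes "partition_on V P" "finite V" "B \<subseteq> V"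
  shows "(\<Sum>S\<in>P. card (B \<inter> S)) = card B"
  unfolding part_sum[OF assms order_refl] using partition_onD1[OF assms(1)] assms(3)
  by (simp add: Int_absorb2)

lemma final_arith:
  fixes a x m k d D :: nat
  assumes "a + m \<le> d" "x \<le> m * (D + 1 - 2 * m)" "m \<le> k" "k = d div 2"
    "4 * k - 2 \<le> D" "d \<le> D"
  shows "a + x \<le> k * (D - 2 * k + 1) + (d + 1) div 2"
proof -
  have dk: "d = 2*k \<or> d = 2*k+1" using assms(4) by arith
  have m2: "2*m \<le> D" "2*k \<le> D" using assms dk by auto
  have key: "int m * (int D - 2 * int m) \<le> int k * (int D - 2 * int k)"
  proof (cases "m = k")
    case False
    then have "m + 1 \<le> k" using assms(3) by simp
    then have "0 \<le> (int k - int m) * (int D - 2 * int k - 2 * int m)"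
      using assms(5) by (intro mult_nonneg_nonneg) auto
    then show ?thesis by (simp add: algebra_simps)
  qed simp
  have f1: "int (D + 1 - 2 * m) = int D + 1 - 2 * int m" using m2 by linarith
  have f2: "int (D - 2 * k + 1) = int D + 1 - 2 * int k" using m2 by linarith
  have e1: "int (m * (D + 1 - 2 * m)) = int m * (int D + 1 - 2 * int m)" unfolding of_nat_mult f1 ..
  have e2: "int (k * (D - 2 * k + 1)) = int k * (int D + 1 - 2 * int k)" unfolding of_nat_mult f2 ..
  have e3: "int ((d + 1) div 2) = int d - int k" using dk by auto
  have "int a + int x \<le> int k * (int D + 1 - 2 * int k) + (int d - int k)"
    using assms(1,2) key e1 by (simp add: algebra_simps)
  then show ?thesis using e2 e3 by linarith
qed

lemma part1:
  assumes G: "graph V E" and d2: "min_degree V E \<ge> 2"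
    and DD: "max_degree V E \<ge> 4 * (min_degree V E div 2) - 2"
    and P: "total_2_coalition_partition V E P"
  shows "card P \<le> (min_degree V E div 2) * (max_degree V E - 2 * (min_degree V E div 2) + 1) + (min_degree V E + 1) div 2"
proof -
  define d where "d = min_degree V E"
  define D where "D = max_degree V E"
  define k where "k = d div 2"
  have finV: "finite V" and neV: "V \<noteq> {}" and Ein: "\<And>u w. E u w \<Longrightarrow> w \<in> V"
    using G unfolding graph_def by auto
  have nbV: "\<And>w. nbhd E w \<subseteq> V" using Ein unfolding nbhd_def by auto
  have finN: "\<And>w. finite (nbhd E w)" using nbV finV finite_subset by blast
  have part: "partition_on V P" and coal: "\<forall>U\<in>P. \<exists>W\<in>P. W \<noteq> U \<and> total_2_coalition V E U W"
    using P unfolding total_2_coalition_partition_def by auto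
  have finP: "finite P" using part finV finite_elements by blast
  have PV: "\<And>S. S \<in> P \<Longrightarrow> S \<subseteq> V" using partition_onD1[OF part] by blast
  have degD: "\<And>w. w \<in> V \<Longrightarrow> degree E w \<le> D" unfolding D_def max_degree_def using finV by auto
  have degd: "\<And>w. w \<in> V \<Longrightarrow> d \<le> degree E w" unfolding d_def min_degree_def using finV by auto
  have "Min (degree E ` V) \<in> degree E ` V" using finV neV by (intro Min_in) auto
  then obtain v where v: "v \<in> V" "degree E v = d" unfolding d_def min_degree_def by auto
  have dD: "d \<le> D" using degD[OF v(1)] v(2) by simp
  define N where "N = nbhd E v"
  have cN: "card N = d" using v unfolding N_def degree_def by simp
  have NV: "N \<subseteq> V" using nbV N_def by simp
  define A where "A = {S\<in>P. S \<inter> N \<noteq> {}}"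
  define Y where "Y = {S\<in>P. 2 \<le> card (N \<inter> S)}"
  define X where "X = P - A"
  have AP: "A \<subseteq> P" unfolding A_def by auto
  have YA: "Y \<subseteq> A" unfolding A_def Y_def by (auto simp: Int_commute)
  have finA: "finite A" and finY: "finite Y" and finX: "finite X"
    using finP AP YA X_def by (auto intro: finite_subset)
  have cP: "card P = card A + card X"
    unfolding X_def using card_Diff_subset[OF finA AP] card_mono[OF finP AP] by simp
  have c1: "card A + card Y \<le> d"
  proof -
    have "(\<Sum>S\<in>P. (if S \<in> A then 1 else 0) + (if S \<in> Y then 1 else 0)) \<le> (\<Sum>S\<in>P. card (N \<inter> S))"
    proof (rule sum_mono)
      fix S assume S: "S \<in> P"
      have fS: "finite (N \<inter> S)" using finN N_def by auto
      show "(if S \<in> A then 1 else 0) + (if S \<in> Y then 1 else 0) \<le> card (N \<inter> S)"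
      proof (cases "S \<in> Y")
        case True then show ?thesis using YA unfolding Y_def by auto
      next
        case False
        show ?thesis
        proof (cases "S \<in> A")
          case True
          then have "N \<inter> S \<noteq> {}" unfolding A_def by auto
          then have "card (N \<inter> S) \<ge> 1" using fS by (simp add: Suc_le_eq card_gt_0_iff)
          then show ?thesis using False by simp
        qed (use False in simp)
      qed
    qed
    also have "\<dots> = d" using part_sum_eq[OF part finV NV] cN by simp
    finally have "(\<Sum>S\<in>P. (if S \<in> A then 1 else 0) + (if S \<in> Y then 1 else 0)) \<le> d" .
    moreover have "(\<Sum>S\<in>P. (if S \<in> A then 1 else 0) + (if S \<in> Y then 1 else 0)) = card A + card Y"
      unfolding sum.distrib using AP YA finP
      by (simp add: sum.If_cases Int_absorb1 Int_absorb2 order_trans)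
    ultimately show ?thesis by simp
  qed
  have partner: "\<forall>x\<in>X. \<exists>W\<in>Y. total_2_coalition V E x W"
  proof
    fix x assume x: "x \<in> X"
    then obtain W where W: "W \<in> P" "total_2_coalition V E x W" using coal X_def by blast
    have "2 \<le> card (nbhd E v \<inter> (x \<union> W))" using W(2) v(1)
      unfolding total_2_coalition_def total_2_dominating_def by blast
    moreover have "N \<inter> x = {}" using x unfolding X_def A_def by blast
    ultimately have "2 \<le> card (N \<inter> W)" unfolding N_def
      by (metis Int_Un_distrib Un_empty_left)
    then show "\<exists>W\<in>Y. total_2_coalition V E x W" using W unfolding Y_def by blast
  qed
  obtain p where p: "\<forall>x\<in>X. p x \<in> Y \<and> total_2_coalition V E x (p x)"
    using bchoice[of X "\<lambda>x W. W \<in> Y \<and> total_2_coalition V E x W"] partner by blast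
  define I where "I = p ` X"
  have IY: "I \<subseteq> Y" using p I_def by auto
  have finI: "finite I" using IY finY finite_subset by blast
  have "\<forall>y\<in>I. \<exists>w\<in>V. card (nbhd E w \<inter> y) < 2"
  proof
    fix y assume "y \<in> I"
    then obtain x where x: "x \<in> X" "y = p x" unfolding I_def by blast
    then have "\<not> total_2_dominating V E y" using p unfolding total_2_coalition_def by blast
    moreover have "y \<subseteq> V" using x p PV Y_def by blast
    ultimately show "\<exists>w\<in>V. card (nbhd E w \<inter> y) < 2" unfolding total_2_dominating_def using not_le by blast
  qed
  then obtain u where u: "\<forall>y\<in>I. u y \<in> V \<and> card (nbhd E (u y) \<inter> y) < 2"
    using bchoice[of I "\<lambda>y w. w \<in> V \<and> card (nbhd E w \<inter> y) < 2"] by blast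
  define F where "F y = {x \<in> X. p x = y}" for y
  have finF: "\<And>y. finite (F y)" using finX F_def by auto
  have IX: "I \<inter> X = {}" using IY YA X_def by blast
  have key: "card (F y') + 2 * card I \<le> D + 1" if y': "y' \<in> I" for y'
  proof -
    define w where "w = u y'"
    have wV: "w \<in> V" using u y' w_def by auto
    define c where "c y = card (nbhd E w \<inter> y)" for y
    have cy': "c y' < 2" using u y' w_def c_def by auto
    have "(\<Sum>S\<in>I \<union> X. c S) \<le> D"
    proof -
      have "I \<union> X \<subseteq> P" using IY YA AP X_def by blast
      then have "(\<Sum>S\<in>I \<union> X. c S) \<le> card (nbhd E w)"
        unfolding c_def by (rule part_sum_le[OF part finV nbV])
      then show ?thesis using degD[OF wV] unfolding degree_def by linarith
    qed
    moreover have "(\<Sum>S\<in>I \<union> X. c S) = (\<Sum>y\<in>I. c y + (\<Sum>x\<in>F y. c x))"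
    proof -
      have "(\<Sum>S\<in>I \<union> X. c S) = (\<Sum>S\<in>I. c S) + (\<Sum>S\<in>X. c S)"
        by (rule sum.union_disjoint[OF finI finX IX])
      moreover have "(\<Sum>S\<in>X. c S) = (\<Sum>y\<in>I. (\<Sum>x\<in>F y. c x))"
        unfolding F_def using sum.group[OF finX finI, of p c] I_def by simp
      ultimately show ?thesis by (simp add: sum.distrib)
    qed
    moreover have "(\<Sum>y\<in>I. c y + (\<Sum>x\<in>F y. c x)) \<ge> (\<Sum>y\<in>I. if y = y' then 1 + card (F y) else 2)"
    proof (rule sum_mono)
      fix y assume y: "y \<in> I"
      have Fne: "card (F y) \<ge> 1" using y finF[of y] unfolding I_def F_def
        by (auto simp: Suc_le_eq card_gt_0_iff)
      have ax: "c x \<ge> 2 - c y" if x: "x \<in> F y" for x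
      proof -
        have xX: "x \<in> X" "p x = y" using x F_def by auto
        then have tc: "total_2_coalition V E x y" using p by auto
        then have "2 \<le> card (nbhd E w \<inter> (x \<union> y))" using wV
          unfolding total_2_coalition_def total_2_dominating_def by blast
        moreover have "x \<inter> y = {}" using tc unfolding total_2_coalition_def by blast
        then have "card (nbhd E w \<inter> (x \<union> y)) = c x + c y" unfolding c_def
          using finN[of w] by (subst card_Un_disjoint[symmetric]) (auto intro: arg_cong[where f=card])
        ultimately show ?thesis by simp
      qed
      have sF: "(\<Sum>x\<in>F y. c x) \<ge> card (F y) * (2 - c y)"
        using sum_mono[of "F y" "\<lambda>_. 2 - c y" c] ax by simp
      show "(if y = y' then 1 + card (F y) else 2) \<le> c y + (\<Sum>x\<in>F y. c x)"
      proof (cases "y = y'")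
        case True
        then have "c y = 0 \<or> c y = 1" using cy' by auto
        then show ?thesis using sF Fne True by auto
      next
        case False
        have "c y = 0 \<or> c y = 1 \<or> c y \<ge> 2" by auto
        then show ?thesis using sF Fne False by auto
      qed
    qed
    moreover have "(\<Sum>y\<in>I. if y = y' then 1 + card (F y) else 2) = 1 + card (F y') + 2 * (card I - 1)"
      using sum.remove[OF finI y', of "\<lambda>y. if y = y' then 1 + card (F y) else 2"] finI y'
      by (simp add: card_Diff_singleton)
    ultimately have "1 + card (F y') + 2 * (card I - 1) \<le> D" by linarith
    moreover have "card I \<ge> 1" using y' finI by (auto simp: Suc_le_eq card_gt_0_iff)
    ultimately show ?thesis by linarith
  qed
  have cX: "card X = (\<Sum>y\<in>I. card (F y))"
  proof -
    have "(\<Sum>y\<in>I. card (F y)) = (\<Sum>y\<in>I. \<Sum>x\<in>F y. (1::nat))" by simp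
    also have "\<dots> = (\<Sum>x\<in>X. 1)" unfolding F_def
      using sum.group[OF finX finI, of p "\<lambda>_. (1::nat)"] I_def by simp
    also have "\<dots> = card X" by simp
    finally show ?thesis by simp
  qed
  have "(\<Sum>y\<in>I. card (F y)) \<le> of_nat (card I) * (D + 1 - 2 * card I)"
  proof (rule sum_bounded_above)
    fix y assume "y \<in> I"
    from key[OF this] show "card (F y) \<le> D + 1 - 2 * card I" by linarith
  qed
  then have h2: "card X \<le> card I * (D + 1 - 2 * card I)" unfolding cX by simp
  have h3: "card I \<le> card Y" using card_mono[OF finY IY] .
  have "card Y \<le> card A" using card_mono[OF finA YA] .
  then have h4: "card I \<le> k" using c1 h3 unfolding k_def by linarith
  have h1: "card A + card I \<le> d" using c1 h3 by linarith
  have h5: "4 * k - 2 \<le> D" using DD unfolding k_def d_def D_def .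
  have "card A + card X \<le> k * (D - 2 * k + 1) + (d + 1) div 2"
    by (rule final_arith[OF h1 h2 h4 k_def h5 dD])
  then show ?thesis unfolding cP d_def D_def k_def .
qed

datatype vt = Vv | Uu nat | Qq nat nat | Xx nat nat | Gg nat nat nat nat

fun Bq :: "nat \<Rightarrow> nat \<Rightarrow> vt \<Rightarrow> vt \<Rightarrow> bool" where
  "Bq k n (Qq j e) (Qq j' e') = (j < k \<and> e < 3 \<and> j' < k \<and> e' < 3 \<and> (j, e) \<noteq> (j', e'))"
| "Bq k n Vv (Qq j e) = (j < k \<and> e < 2)"
| "Bq k n (Uu i) (Qq j e) = (i < k \<and> j < k \<and> (e = 0 \<or> (e = 1 \<and> j \<noteq> i)))"
| "Bq k n (Uu i) (Xx i' t) = (i < k \<and> i' = i \<and> t < n)"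
| "Bq k n (Xx i t) (Gg i' t' j e) = (i < k \<and> t < n \<and> i' = i \<and> t' = t \<and> j < k \<and> e < 3)"
| "Bq k n (Gg i t j e) (Gg i' t' j' e') = (i < k \<and> t < n \<and> i' = i \<and> t' = t \<and> j < k \<and> e < 3
      \<and> j' < k \<and> e' < 3 \<and> (j, e) \<noteq> (j', e'))"
| "Bq k n _ _ = False"

definition adj :: "nat \<Rightarrow> nat \<Rightarrow> vt \<Rightarrow> vt \<Rightarrow> bool" where
  "adj k n a b = (Bq k n a b \<or> Bq k n b a)"

definition VS :: "nat \<Rightarrow> nat \<Rightarrow> vt set" where
  "VS k n = insert Vv (Uu ` {..<k} \<union> (\<lambda>(j, e). Qq j e) ` ({..<k} \<times> {..<3})
     \<union> (\<lambda>(i, t). Xx i t) ` ({..<k} \<times> {..<n})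
     \<union> (\<lambda>(i, t, j, e). Gg i t j e) ` ({..<k} \<times> {..<n} \<times> {..<k} \<times> {..<3}))"

lemma VS_simps[simp]:
  "Vv \<in> VS k n" "Uu i \<in> VS k n \<longleftrightarrow> i < k" "Qq j e \<in> VS k n \<longleftrightarrow> j < k \<and> e < 3"
  "Xx i t \<in> VS k n \<longleftrightarrow> i < k \<and> t < n"
  "Gg i t j e \<in> VS k n \<longleftrightarrow> i < k \<and> t < n \<and> j < k \<and> e < 3"
  unfolding VS_def by force+

lemma finite_VS: "finite (VS k n)" unfolding VS_def by auto

lemma adj_sym: "adj k n a b = adj k n b a" unfolding adj_def by auto

lemma adj_irrefl: "\<not> adj k n a a" unfolding adj_def by (cases a) auto

lemma adj_VS: "adj k n a b \<Longrightarrow> b \<in> VS k n"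
  unfolding adj_def by (cases a; cases b) auto

lemma nbhd_VS: "nbhd (adj k n) w \<subseteq> VS k n" unfolding nbhd_def using adj_VS by auto

lemma finite_nbhd: "finite (nbhd (adj k n) w)" using finite_subset[OF nbhd_VS finite_VS] .

lemma nb_Vv: "nbhd (adj k n) Vv = (\<lambda>(j, e). Qq j e) ` ({..<k} \<times> {..<2})"
  unfolding nbhd_def adj_def
  apply (rule set_eqI) subgoal for x by (cases x) auto done

lemma nb_Uu: "i < k \<Longrightarrow> nbhd (adj k n) (Uu i) =
   (\<lambda>j. Qq j 0) ` {..<k} \<union> (\<lambda>j. Qq j 1) ` ({..<k} - {i}) \<union> Xx i ` {..<n}"
  unfolding nbhd_def adj_def
  apply (rule set_eqI) subgoal for x by (cases x) auto done

lemma card_prod_img: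
  assumes "inj_on f (A \<times> B)" "finite A" "finite B"
  shows "card (f ` (A \<times> B)) = card A * card B"
  using card_image[OF assms(1)] card_cartesian_product by simp

lemma deg_Vv: "degree (adj k n) Vv = 2 * k"
  unfolding degree_def nb_Vv by (subst card_prod_img) (auto simp: inj_on_def)

lemma deg_Uu: "i < k \<Longrightarrow> degree (adj k n) (Uu i) = 2 * k - 1 + n"
proof -
  assume i: "i < k"
  have "card ((\<lambda>j. Qq j 0) ` {..<k} \<union> (\<lambda>j. Qq j 1) ` ({..<k} - {i}) \<union> Xx i ` {..<n})
     = card ((\<lambda>j. Qq j 0) ` {..<k}) + card ((\<lambda>j. Qq j 1) ` ({..<k} - {i})) + card (Xx i ` {..<n})"
    by (subst card_Un_disjoint, auto)+
  also have "\<dots> = k + (k - 1) + n"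
    using i by (subst card_image, simp add: inj_on_def)+ simp
  finally show ?thesis unfolding degree_def nb_Uu[OF i] using i by simp
qed

lemma deg_bounds:
  assumes z: "z \<in> VS k n" and k: "k \<ge> 1" and n: "n \<ge> 1"
  shows "2 * k \<le> degree (adj k n) z \<and> degree (adj k n) z \<le> max (4 * k + 1) (2 * k - 1 + n)"
proof (cases z)
  case Vv then show ?thesis using deg_Vv by simp
next
  case (Uu i) then show ?thesis using deg_Uu z n by simp
next
  case (Qq j e)
  then have je: "j < k" "e < 3" using z by auto
  have lo: "(\<lambda>(j', e'). Qq j' e') ` ({..<k} \<times> ({..<3} - {e})) \<subseteq> nbhd (adj k n) z"
    using je Qq unfolding nbhd_def adj_def by auto
  have "card ((\<lambda>(j', e'). Qq j' e') ` ({..<k} \<times> ({..<3} - {e}))) = k * 2"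
    using je by (subst card_prod_img) (auto simp: inj_on_def)
  then have l: "2 * k \<le> degree (adj k n) z"
    using card_mono[OF finite_nbhd lo] unfolding degree_def by simp
  have up: "nbhd (adj k n) z \<subseteq> {Vv} \<union> Uu ` {..<k} \<union> (\<lambda>(j, e). Qq j e) ` ({..<k} \<times> {..<3})"
    unfolding nbhd_def adj_def Qq
    apply (rule subsetI) subgoal for x by (cases x) auto done
  have "card ({Vv} \<union> Uu ` {..<k} \<union> (\<lambda>(j, e). Qq j e) ` ({..<k} \<times> {..<3})) \<le> 1 + k + k * 3"
    by (rule order_trans[OF card_Un_le], rule add_mono, rule order_trans[OF card_Un_le])
       (auto intro: order_trans[OF card_image_le])
  then have "degree (adj k n) z \<le> 4 * k + 1"
    using card_mono[OF _ up] unfolding degree_def by (simp add: finite_VS)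
  then show ?thesis using l by simp
next
  case (Xx i t)
  then have it: "i < k" "t < n" using z by auto
  have lo: "(\<lambda>(j, e). Gg i t j e) ` ({..<k} \<times> {..<2}) \<subseteq> nbhd (adj k n) z"
    using it Xx unfolding nbhd_def adj_def by auto
  have "card ((\<lambda>(j, e). Gg i t j e) ` ({..<k} \<times> {..<2})) = k * 2"
    by (subst card_prod_img) (auto simp: inj_on_def)
  then have l: "2 * k \<le> degree (adj k n) z"
    using card_mono[OF finite_nbhd lo] unfolding degree_def by simp
  have up: "nbhd (adj k n) z \<subseteq> {Uu i} \<union> (\<lambda>(j, e). Gg i t j e) ` ({..<k} \<times> {..<3})"
    unfolding nbhd_def adj_def Xx
    apply (rule subsetI) subgoal for x by (cases x) auto done
  have "card ({Uu i} \<union> (\<lambda>(j, e). Gg i t j e) ` ({..<k} \<times> {..<3})) \<le> 1 + k * 3"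
    by (rule order_trans[OF card_Un_le], rule add_mono)
       (auto intro: order_trans[OF card_image_le])
  then have "degree (adj k n) z \<le> 4 * k + 1"
    using card_mono[OF _ up] unfolding degree_def by simp
  then show ?thesis using l by simp
next
  case (Gg i t j e)
  then have it: "i < k" "t < n" "j < k" "e < 3" using z by auto
  have lo: "(\<lambda>(j', e'). Gg i t j' e') ` ({..<k} \<times> ({..<3} - {e})) \<subseteq> nbhd (adj k n) z"
    using it Gg unfolding nbhd_def adj_def by auto
  have "card ((\<lambda>(j', e'). Gg i t j' e') ` ({..<k} \<times> ({..<3} - {e}))) = k * 2"
    using it by (subst card_prod_img) (auto simp: inj_on_def)
  then have l: "2 * k \<le> degree (adj k n) z"
    using card_mono[OF finite_nbhd lo] unfolding degree_def by simp
  have up: "nbhd (adj k n) z \<subseteq> {Xx i t} \<union> (\<lambda>(j, e). Gg i t j e) ` ({..<k} \<times> {..<3})"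
    unfolding nbhd_def adj_def Gg
    apply (rule subsetI) subgoal for x by (cases x) auto done
  have "card ({Xx i t} \<union> (\<lambda>(j, e). Gg i t j e) ` ({..<k} \<times> {..<3})) \<le> 1 + k * 3"
    by (rule order_trans[OF card_Un_le], rule add_mono)
       (auto intro: order_trans[OF card_image_le])
  then have "degree (adj k n) z \<le> 4 * k + 1"
    using card_mono[OF _ up] unfolding degree_def by simp
  then show ?thesis using l by simp
qed

lemma graph_VS:
  assumes k: "k \<ge> 1"
  shows "graph (VS k n) (adj k n)"
proof -
  let ?R = "{(x, y). adj k n x y}"
  have e: "adj k n x y \<Longrightarrow> (x, y) \<in> ?R" for x y by simp
  have q0: "(Vv, Qq 0 0) \<in> ?R\<^sup>*" using k by (intro r_into_rtrancl e) (simp add: adj_def)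
  have reach: "(Vv, z) \<in> ?R\<^sup>*" if z: "z \<in> VS k n" for z
  proof (cases z)
    case Vv then show ?thesis by simp
  next
    case (Uu i)
    have "adj k n (Qq 0 0) (Uu i)" using z Uu k by (simp add: adj_def)
    then show ?thesis using q0 Uu by (meson e rtrancl_into_rtrancl)
  next
    case (Qq j e')
    show ?thesis
    proof (cases "(j, e') = (0, 0)")
      case True then show ?thesis using q0 Qq by simp
    next
      case False
      then have "adj k n (Qq 0 0) (Qq j e')" using z Qq k by (auto simp: adj_def)
      then show ?thesis using q0 Qq by (meson e rtrancl_into_rtrancl)
    qed
  next
    case (Xx i t)
    have "adj k n (Qq 0 0) (Uu i)" "adj k n (Uu i) (Xx i t)" using z Xx k by (auto simp: adj_def)
    then show ?thesis using q0 Xx by (meson e rtrancl_into_rtrancl)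
  next
    case (Gg i t j e')
    have "adj k n (Qq 0 0) (Uu i)" "adj k n (Uu i) (Xx i t)" "adj k n (Xx i t) (Gg i t j e')"
      using z Gg k by (auto simp: adj_def)
    then show ?thesis using q0 Gg by (meson e rtrancl_into_rtrancl)
  qed
  have symR: "sym (?R\<^sup>*)" by (rule sym_rtrancl) (auto simp: sym_def adj_sym)
  have conn: "\<forall>u\<in>VS k n. \<forall>v\<in>VS k n. (u, v) \<in> ?R\<^sup>*"
  proof (intro ballI)
    fix u v assume "u \<in> VS k n" "v \<in> VS k n"
    then have "(u, Vv) \<in> ?R\<^sup>*" "(Vv, v) \<in> ?R\<^sup>*" using reach symR by (auto dest: symD)
    then show "(u, v) \<in> ?R\<^sup>*" by simp
  qed
  show ?thesis unfolding graph_def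
    using finite_VS adj_VS adj_sym adj_irrefl conn by (metis empty_iff VS_simps(1))
qed

lemma min_VS: "k \<ge> 1 \<Longrightarrow> n \<ge> 1 \<Longrightarrow> min_degree (VS k n) (adj k n) = 2 * k"
  unfolding min_degree_def
  by (rule Min_eqI) (use finite_VS deg_bounds deg_Vv in \<open>auto intro!: image_eqI[of _ _ Vv]\<close>)

lemma max_VS:
  assumes k: "k \<ge> 1" and n: "n = 2 * k + 2"
  shows "max_degree (VS k n) (adj k n) = 4 * k + 1"
  unfolding max_degree_def
proof (rule Max_eqI)
  have mx: "max (4 * k + 1) (2 * k - 1 + n) = 4 * k + 1" using k n by simp
  show "finite (degree (adj k n) ` VS k n)" using finite_VS by simp
  show "y \<le> 4 * k + 1" if "y \<in> degree (adj k n) ` VS k n" for y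
    using that deg_bounds[OF _ k, of _ n] n mx by force
  have "degree (adj k n) (Uu 0) = 4 * k + 1" using deg_Uu[of 0 k n] k n by simp
  then show "4 * k + 1 \<in> degree (adj k n) ` VS k n" using k
    by (metis VS_simps(2) image_eqI less_le_trans zero_less_one)
qed

fun col :: "vt \<Rightarrow> nat option" where
  "col Vv = Some 0" | "col (Uu i) = Some 0" | "col (Qq j e) = Some j" | "col (Xx i t) = None"
| "col (Gg i t j e) = Some j"

definition Yb :: "nat \<Rightarrow> nat \<Rightarrow> nat \<Rightarrow> vt set" where
  "Yb k n j = {z \<in> VS k n. col z = Some j}"

definition blk :: "nat \<Rightarrow> nat \<Rightarrow> vt \<Rightarrow> vt set" where
  "blk k n z = (if col z = None then {z} else {z' \<in> VS k n. col z' = col z})"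

lemma partition_blk_gen:
  assumes "\<forall>z\<in>V. z \<in> f z \<and> f z \<subseteq> V" "\<forall>z\<in>V. \<forall>z'\<in>f z. f z' = f z"
  shows "partition_on V (f ` V)"
proof (rule partition_onI)
  show "\<Union> (f ` V) = V" using assms(1) by blast
  show "{} \<notin> f ` V" using assms(1) by blast
  show "disjnt p q" if pq: "p \<in> f ` V" "q \<in> f ` V" "p \<noteq> q" for p q
  proof -
    obtain a b where ab: "a \<in> V" "b \<in> V" "p = f a" "q = f b" using pq by blast
    show ?thesis unfolding disjnt_def
    proof (rule ccontr)
      assume "p \<inter> q \<noteq> {}"
      then obtain z where "z \<in> f a" "z \<in> f b" using ab by blast
      then have "f z = f a" "f z = f b" using assms(2) ab by blast+
      then show False using pq(3) ab by simp
    qed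
  qed
qed

lemma col_VS: "z \<in> VS k n \<Longrightarrow> col z = Some j \<Longrightarrow> k \<ge> 1 \<Longrightarrow> j < k"
  by (cases z) auto

lemma blk1: "z \<in> VS k n \<Longrightarrow> z \<in> blk k n z \<and> blk k n z \<subseteq> VS k n"
  unfolding blk_def by simp

lemma blk2: "z' \<in> blk k n z \<Longrightarrow> blk k n z' = blk k n z"
proof (cases "col z")
  case None
  assume "z' \<in> blk k n z" then show ?thesis using None unfolding blk_def by simp
next
  case (Some a)
  assume "z' \<in> blk k n z"
  then have "z' \<in> VS k n" "col z' = Some a" using Some unfolding blk_def by simp_all
  then show ?thesis using Some unfolding blk_def by simp
qed

lemma partition_VS: "partition_on (VS k n) (blk k n ` VS k n)"
  by (rule partition_blk_gen) (use blk1 blk2 in blast)+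

lemma blk_image:
  assumes k: "k \<ge> 1"
  shows "blk k n ` VS k n = Yb k n ` {..<k} \<union> (\<lambda>z. {z}) ` ((\<lambda>(i, t). Xx i t) ` ({..<k} \<times> {..<n}))"
proof (rule set_eqI, rule iffI)
  fix S assume "S \<in> blk k n ` VS k n"
  then obtain z where z: "z \<in> VS k n" "S = blk k n z" by blast
  show "S \<in> Yb k n ` {..<k} \<union> (\<lambda>z. {z}) ` ((\<lambda>(i, t). Xx i t) ` ({..<k} \<times> {..<n}))"
  proof (cases "col z")
    case None
    then obtain i t where zi: "z = Xx i t" by (cases z) auto
    then have it: "i < k" "t < n" using z by simp_all
    have S: "S = {Xx i t}" using z None zi unfolding blk_def by simp
    have "Xx i t \<in> (\<lambda>(i, t). Xx i t) ` ({..<k} \<times> {..<n})"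
      by (rule rev_image_eqI[of "(i, t)"]) (use it in simp_all)
    then show ?thesis unfolding S by blast
  next
    case (Some j)
    then have "j < k" using col_VS z k by blast
    moreover have "S = Yb k n j" using z Some unfolding blk_def Yb_def by simp
    ultimately show ?thesis by blast
  qed
next
  fix S assume S: "S \<in> Yb k n ` {..<k} \<union> (\<lambda>z. {z}) ` ((\<lambda>(i, t). Xx i t) ` ({..<k} \<times> {..<n}))"
  show "S \<in> blk k n ` VS k n"
  proof (cases "S \<in> Yb k n ` {..<k}")
    case True
    then obtain j where j: "j < k" "S = Yb k n j" by blast
    then have "S = blk k n (Qq j 0)" unfolding blk_def Yb_def by simp
    moreover have "Qq j 0 \<in> VS k n" using j by simp
    ultimately show ?thesis by blast
  next
    case False
    then have "S \<in> (\<lambda>z. {z}) ` ((\<lambda>(i, t). Xx i t) ` ({..<k} \<times> {..<n}))" using S by blast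
    then obtain p where p: "p \<in> {..<k} \<times> {..<n}" "S = {(\<lambda>(i, t). Xx i t) p}" by blast
    then obtain i t where it: "i < k" "t < n" "S = {Xx i t}" by (cases p) simp
    then have "S = blk k n (Xx i t)" unfolding blk_def by simp
    moreover have "Xx i t \<in> VS k n" using it by simp
    ultimately show ?thesis by blast
  qed
qed

lemma card_blk:
  assumes k: "k \<ge> 1"
  shows "card (blk k n ` VS k n) = k + k * n"
proof -
  have i1: "inj_on (Yb k n) {..<k}"
  proof (rule inj_onI)
    fix a b assume ab: "a \<in> {..<k}" "b \<in> {..<k}" "Yb k n a = Yb k n b"
    have "Qq a 0 \<in> Yb k n a" using ab(1) unfolding Yb_def by simp
    then have "Qq a 0 \<in> Yb k n b" using ab by simp
    then have "col (Qq a 0) = Some b" unfolding Yb_def by blast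
    then show "a = b" by simp
  qed
  have c1: "card (Yb k n ` {..<k}) = k" using card_image[OF i1] by simp
  have c2: "card ((\<lambda>z. {z}) ` ((\<lambda>(i, t). Xx i t) ` ({..<k} \<times> {..<n}))) = k * n"
    by (subst card_image, simp add: inj_on_def)
       (subst card_prod_img, auto simp: inj_on_def)
  have nx: "x \<notin> Yb k n j" if "x \<in> (\<lambda>(i, t). Xx i t) ` ({..<k} \<times> {..<n})" for x j
    using that unfolding Yb_def by auto
  have d: "Yb k n ` {..<k} \<inter> (\<lambda>z. {z}) ` ((\<lambda>(i, t). Xx i t) ` ({..<k} \<times> {..<n})) = {}"
  proof (rule equals0I)
    fix S assume "S \<in> Yb k n ` {..<k} \<inter> (\<lambda>z. {z}) ` ((\<lambda>(i, t). Xx i t) ` ({..<k} \<times> {..<n}))"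
    then obtain j x where "S = Yb k n j" "S = {x}" "x \<in> (\<lambda>(i, t). Xx i t) ` ({..<k} \<times> {..<n})" by blast
    then show False using nx by blast
  qed
  show ?thesis unfolding blk_image[OF k] using card_Un_disjoint[OF _ _ d] c1 c2 by simp
qed

lemma not_T2D_single: "\<not> total_2_dominating (VS k n) (adj k n) {x}"
proof -
  have "card (nbhd (adj k n) Vv \<inter> {x}) \<le> card {x}" by (rule card_mono) auto
  then have "\<not> 2 \<le> card (nbhd (adj k n) Vv \<inter> {x})" by simp
  then show ?thesis unfolding total_2_dominating_def using VS_simps(1) by blast
qed

lemma not_T2D_Yb:
  assumes j: "j < k"
  shows "\<not> total_2_dominating (VS k n) (adj k n) (Yb k n j)"
proof -
  have "nbhd (adj k n) (Uu j) \<inter> Yb k n j \<subseteq> {Qq j 0}"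
    unfolding nb_Uu[OF j] Yb_def by auto
  then have "card (nbhd (adj k n) (Uu j) \<inter> Yb k n j) \<le> card {Qq j 0}"
    by (intro card_mono) auto
  then have "\<not> 2 \<le> card (nbhd (adj k n) (Uu j) \<inter> Yb k n j)" by simp
  moreover have "Uu j \<in> VS k n" using j by simp
  ultimately show ?thesis unfolding total_2_dominating_def by blast
qed

lemma mem2:
  "adj k n w a \<Longrightarrow> adj k n w b \<Longrightarrow> a \<in> T \<Longrightarrow> b \<in> T \<Longrightarrow> a \<noteq> b \<Longrightarrow>
   \<exists>a b. a \<in> nbhd (adj k n) w \<inter> T \<and> b \<in> nbhd (adj k n) w \<inter> T \<and> a \<noteq> b"
  unfolding nbhd_def by blast

lemma T2D_union:
  assumes j: "j < k" and t: "t < n"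
  shows "total_2_dominating (VS k n) (adj k n) (Yb k n j \<union> {Xx j t})"
  unfolding total_2_dominating_def
proof (intro conjI ballI)
  show "Yb k n j \<union> {Xx j t} \<subseteq> VS k n" using j t unfolding Yb_def by auto
  fix w assume w: "w \<in> VS k n"
  let ?S = "nbhd (adj k n) w \<inter> (Yb k n j \<union> {Xx j t})"
  have f: "finite ?S" using finite_nbhd by blast
  have ex: "\<exists>a b. a \<in> ?S \<and> b \<in> ?S \<and> a \<noteq> b"
  proof (cases w)
    case Vv then show ?thesis using j
      by (intro mem2[of _ _ _ "Qq j 0" "Qq j 1"]) (simp_all add: adj_def Yb_def)
  next
    case (Uu i)
    show ?thesis
    proof (cases "i = j")
      case True then show ?thesis using j t Uu
        by (intro mem2[of _ _ _ "Qq j 0" "Xx j t"]) (simp_all add: adj_def Yb_def)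
    next
      case False then show ?thesis using j w Uu
        by (intro mem2[of _ _ _ "Qq j 0" "Qq j 1"]) (simp_all add: adj_def Yb_def)
    qed
  next
    case (Qq j' e')
    then show ?thesis using j w
      by (intro mem2[of _ _ _ "Qq j (if e' = 0 then 1 else 0)" "Qq j (if e' = 2 then 1 else 2)"])
         (simp_all add: adj_def Yb_def)
  next
    case (Xx i t')
    then show ?thesis using j w
      by (intro mem2[of _ _ _ "Gg i t' j 0" "Gg i t' j 1"]) (simp_all add: adj_def Yb_def)
  next
    case (Gg i t' j' e')
    then show ?thesis using j w
      by (intro mem2[of _ _ _ "Gg i t' j (if e' = 0 then 1 else 0)" "Gg i t' j (if e' = 2 then 1 else 2)"])
         (simp_all add: adj_def Yb_def)
  qed
  then obtain a b where "a \<in> ?S" "b \<in> ?S" "a \<noteq> b" by blast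
  then have "card {a, b} \<le> card ?S" using f by (intro card_mono) auto
  then show "2 \<le> card ?S" using \<open>a \<noteq> b\<close> by simp
qed

lemma tcp_VS:
  assumes k: "k \<ge> 1" and n: "n \<ge> 1"
  shows "total_2_coalition_partition (VS k n) (adj k n) (blk k n ` VS k n)"
  unfolding total_2_coalition_partition_def
proof (intro conjI ballI)
  show "partition_on (VS k n) (blk k n ` VS k n)" by (rule partition_VS)
  fix U assume "U \<in> blk k n ` VS k n"
  then have U: "U \<in> Yb k n ` {..<k} \<union> (\<lambda>z. {z}) ` ((\<lambda>(i, t). Xx i t) ` ({..<k} \<times> {..<n}))"
    using blk_image[OF k] by simp
  show "\<exists>W\<in>blk k n ` VS k n. W \<noteq> U \<and> total_2_coalition (VS k n) (adj k n) U W"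
  proof (cases "U \<in> Yb k n ` {..<k}")
    case True
    then obtain j where j: "j < k" "U = Yb k n j" by blast
    have "Xx j 0 \<in> (\<lambda>(i, t). Xx i t) ` ({..<k} \<times> {..<n})" using j n
      by (intro rev_image_eqI[of "(j, 0)"]) auto
    then have W: "{Xx j 0} \<in> blk k n ` VS k n" unfolding blk_image[OF k] by blast
    have nx: "Xx j 0 \<notin> U" using j by (simp add: Yb_def)
    then have ne: "{Xx j 0} \<noteq> U" by blast
    have "total_2_coalition (VS k n) (adj k n) U {Xx j 0}"
    proof -
      have "U \<inter> {Xx j 0} = {}" using nx by blast
      then show ?thesis unfolding total_2_coalition_def
        using j n not_T2D_Yb[of j k n] not_T2D_single T2D_union[of j k 0 n] by simp
    qed
    then show ?thesis using W ne by blast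
  next
    case False
    then obtain i t where it: "i < k" "t < n" "U = {Xx i t}" using U by auto
    have W: "Yb k n i \<in> blk k n ` VS k n" using blk_image[OF k] it by auto
    have nx: "Xx i t \<notin> Yb k n i" by (simp add: Yb_def)
    then have ne: "Yb k n i \<noteq> U" using it by blast
    have "total_2_coalition (VS k n) (adj k n) U (Yb k n i)"
    proof -
      have "U \<inter> Yb k n i = {}" using it nx by blast
      moreover have "U \<union> Yb k n i = Yb k n i \<union> {Xx i t}" using it by blast
      ultimately show ?thesis unfolding total_2_coalition_def
        using it not_T2D_Yb[of i k n] not_T2D_single T2D_union[of i k t n] by simp
    qed
    then show ?thesis using W ne by blast
  qed
qed

definition imgE :: "('b \<Rightarrow> 'c) \<Rightarrow> ('b \<Rightarrow> 'b \<Rightarrow> bool) \<Rightarrow> 'c \<Rightarrow> 'c \<Rightarrow> bool" where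
  "imgE f E a b = (\<exists>x y. a = f x \<and> b = f y \<and> E x y)"

lemma imgE_f: "inj f \<Longrightarrow> imgE f E (f x) (f y) = E x y"
  unfolding imgE_def by (auto dest: injD)

lemma nb_img: "inj f \<Longrightarrow> nbhd (imgE f E) (f x) = f ` nbhd E x"
  unfolding nbhd_def imgE_def by (auto dest: injD)

lemma deg_img: "inj f \<Longrightarrow> degree (imgE f E) (f x) = degree E x"
  unfolding degree_def nb_img by (simp add: card_image inj_on_subset)

lemma degs_img: "inj f \<Longrightarrow> degree (imgE f E) ` (f ` V) = degree E ` V"
  using deg_img by (metis (no_types, lifting) image_cong image_image)

lemma min_img: "inj f \<Longrightarrow> min_degree (f ` V) (imgE f E) = min_degree V E"
  unfolding min_degree_def degs_img ..

lemma max_img: "inj f \<Longrightarrow> max_degree (f ` V) (imgE f E) = max_degree V E"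
  unfolding max_degree_def degs_img ..

lemma graph_img:
  assumes f: "inj f" and G: "graph V E"
  shows "graph (f ` V) (imgE f E)"
proof -
  let ?R = "{(x, y). E x y}" and ?R' = "{(x, y). imgE f E x y}"
  have rt: "(f x, f y) \<in> ?R'\<^sup>*" if "(x, y) \<in> ?R\<^sup>*" for x y
    using that
  proof (induction rule: rtrancl_induct)
    case base then show ?case by simp
  next
    case (step y z)
    then have "(f y, f z) \<in> ?R'" using imgE_f[OF f] by simp
    then show ?case using step.IH by (rule rtrancl_into_rtrancl[rotated])
  qed
  show ?thesis using G unfolding graph_def
    apply (intro conjI)
    subgoal by simp
    subgoal by simp
    subgoal unfolding imgE_def by blast
    subgoal unfolding imgE_def by blast
    subgoal using f unfolding imgE_def by (auto dest: injD)
    subgoal using rt by blast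
    done
qed

lemma T2D_img:
  assumes f: "inj f" and S: "S \<subseteq> V"
  shows "total_2_dominating (f ` V) (imgE f E) (f ` S) = total_2_dominating V E S"
proof -
  have "card (nbhd (imgE f E) (f x) \<inter> f ` S) = card (nbhd E x \<inter> S)" for x
  proof -
    have "nbhd (imgE f E) (f x) \<inter> f ` S = f ` (nbhd E x \<inter> S)"
      unfolding nb_img[OF f] using f by (simp add: image_Int)
    then show ?thesis using f by (simp add: card_image inj_on_subset)
  qed
  then show ?thesis unfolding total_2_dominating_def using S by auto
qed

lemma tcp_img:
  assumes f: "inj f" and P: "total_2_coalition_partition V E P"
  shows "total_2_coalition_partition (f ` V) (imgE f E) ((`) f ` P)"
proof -
  have part: "partition_on V P" and coal: "\<forall>U\<in>P. \<exists>W\<in>P. W \<noteq> U \<and> total_2_coalition V E U W"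
    using P unfolding total_2_coalition_partition_def by auto
  have PV: "\<And>S. S \<in> P \<Longrightarrow> S \<subseteq> V" using partition_onD1[OF part] by blast
  have "partition_on (f ` V) ((`) f ` P - {{}})"
    by (rule partition_on_inj_image[OF part]) (rule inj_on_subset[OF f subset_UNIV])
  moreover have "(`) f ` P - {{}} = (`) f ` P" using partition_onD3[OF part] by auto
  ultimately have p2: "partition_on (f ` V) ((`) f ` P)" by simp
  have tc: "total_2_coalition (f ` V) (imgE f E) (f ` U) (f ` W)"
    if "U \<in> P" "W \<in> P" "total_2_coalition V E U W" for U W
  proof -
    have "f ` U \<inter> f ` W = {}" using that(3) f unfolding total_2_coalition_def by (simp add: image_Int[symmetric])
    moreover have "U \<union> W \<subseteq> V" using PV that by blast
    ultimately show ?thesis using that PV T2D_img[OF f] unfolding total_2_coalition_def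
      by (metis image_Un)
  qed
  show ?thesis unfolding total_2_coalition_partition_def
  proof (intro conjI ballI)
    show "partition_on (f ` V) ((`) f ` P)" by (rule p2)
    fix U' assume "U' \<in> (`) f ` P"
    then obtain U where U: "U \<in> P" "U' = f ` U" by blast
    then obtain W where W: "W \<in> P" "W \<noteq> U" "total_2_coalition V E U W" using coal by blast
    have "f ` W \<noteq> f ` U" using W(2) f by (metis inj_image_eq_iff)
    then show "\<exists>W'\<in>(`) f ` P. W' \<noteq> U' \<and> total_2_coalition (f ` V) (imgE f E) U' W'"
      using tc[OF U(1) W(1,3)] U W(1) by blast
  qed
qed

lemma card_img_P: "inj f \<Longrightarrow> card ((`) f ` P) = card P"
  by (rule card_image, rule inj_on_image, rule inj_on_subset[of _ UNIV]) auto

lemma TC2_sub: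
  assumes "\<And>P. total_2_coalition_partition V E P \<Longrightarrow> card P \<le> b"
  shows "insert 0 {card P | P. total_2_coalition_partition V E P} \<subseteq> {..b}"
proof
  fix x assume "x \<in> insert 0 {card P | P. total_2_coalition_partition V E P}"
  then have "x = 0 \<or> (\<exists>P. x = card P \<and> total_2_coalition_partition V E P)" by blast
  then show "x \<in> {..b}"
  proof
    assume "\<exists>P. x = card P \<and> total_2_coalition_partition V E P"
    then obtain P where "x = card P" "total_2_coalition_partition V E P" by blast
    then show ?thesis using assms by simp
  qed simp
qed

lemma TC2_le:
  assumes "\<And>P. total_2_coalition_partition V E P \<Longrightarrow> card P \<le> b"
  shows "TC2 V E \<le> b"
proof -
  have sub: "insert 0 {card P | P. total_2_coalition_partition V E P} \<subseteq> {..b}"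
    by (rule TC2_sub, rule assms(1))
  have fin: "finite (insert 0 {card P | P. total_2_coalition_partition V E P})"
    by (rule finite_subset[OF sub]) simp
  show ?thesis unfolding TC2_def
  proof (rule Max.boundedI[OF fin])
    show "insert 0 {card P | P. total_2_coalition_partition V E P} \<noteq> {}" by blast
    fix a assume "a \<in> insert 0 {card P | P. total_2_coalition_partition V E P}"
    then show "a \<le> b" using sub by blast
  qed
qed

lemma TC2_eqI:
  assumes "\<And>P. total_2_coalition_partition V E P \<Longrightarrow> card P \<le> b"
    and P0: "total_2_coalition_partition V E P0" and c: "card P0 = b"
  shows "TC2 V E = b"
proof -
  have sub: "insert 0 {card P | P. total_2_coalition_partition V E P} \<subseteq> {..b}"
    by (rule TC2_sub, rule assms(1))
  have fin: "finite (insert 0 {card P | P. total_2_coalition_partition V E P})"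
    by (rule finite_subset[OF sub]) simp
  have "b \<in> insert 0 {card P | P. total_2_coalition_partition V E P}" using P0 c by blast
  moreover have "a \<le> b" if "a \<in> insert 0 {card P | P. total_2_coalition_partition V E P}" for a
    using that sub by blast
  ultimately show ?thesis unfolding TC2_def by (intro Max_eqI[OF fin]) auto
qed

fun enc :: "vt \<Rightarrow> nat" where
  "enc Vv = list_encode [0]" | "enc (Uu i) = list_encode [1, i]" | "enc (Qq j e) = list_encode [2, j, e]"
| "enc (Xx i t) = list_encode [3, i, t]" | "enc (Gg i t j e) = list_encode [4, i, t, j, e]"

lemma inj_enc: "inj enc"
proof (rule injI)
  fix x y assume "enc x = enc y"
  then show "x = y" by (cases x; cases y) (auto simp: list_encode_eq)
qed

theorem theorem3p9:
  shows "(\<forall>(V :: 'a set) E. graph V E \<longrightarrow> min_degree V E \<ge> 2 \<longrightarrow>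
            max_degree V E \<ge> 4 * (min_degree V E div 2) - 2 \<longrightarrow>
            TC2 V E \<le> (min_degree V E div 2) * (max_degree V E - 2 * (min_degree V E div 2) + 1)
                      + (min_degree V E + 1) div 2)
       \<and> (\<forall>d::nat. d \<ge> 2 \<longrightarrow> even d \<longrightarrow>
            (\<exists>(V :: nat set) E. graph V E \<and> min_degree V E = d \<and>
               max_degree V E \<ge> 4 * (d div 2) - 2 \<and>
               TC2 V E = (d div 2) * (max_degree V E - 2 * (d div 2) + 1) + (d + 1) div 2))"
proof (intro conjI allI impI)
  fix V :: "'a set" and E
  assume "graph V E" "min_degree V E \<ge> 2" "max_degree V E \<ge> 4 * (min_degree V E div 2) - 2"
  then show "TC2 V E \<le> (min_degree V E div 2) * (max_degree V E - 2 * (min_degree V E div 2) + 1)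
                      + (min_degree V E + 1) div 2"
    by (intro TC2_le) (rule part1)
next
  fix d :: nat assume d: "d \<ge> 2" "even d"
  define k where "k = d div 2"
  define n where "n = 2 * k + 2"
  have k: "k \<ge> 1" "d = 2 * k" using d k_def by auto
  have n1: "n \<ge> 1" using n_def by simp
  define V where "V = enc ` VS k n"
  define E where "E = imgE enc (adj k n)"
  have G: "graph V E" unfolding V_def E_def by (rule graph_img[OF inj_enc graph_VS[OF k(1)]])
  have mn: "min_degree V E = d" unfolding V_def E_def min_img[OF inj_enc] min_VS[OF k(1) n1] k(2) ..
  have mx: "max_degree V E = 4 * k + 1" unfolding V_def E_def max_img[OF inj_enc] using max_VS[OF k(1) n_def] .
  have P0: "total_2_coalition_partition V E ((`) enc ` (blk k n ` VS k n))"
    unfolding V_def E_def by (rule tcp_img[OF inj_enc tcp_VS[OF k(1) n1]])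
  have cP0: "card ((`) enc ` (blk k n ` VS k n)) = k * (4 * k + 1 - 2 * k + 1) + (d + 1) div 2"
    unfolding card_img_P[OF inj_enc] card_blk[OF k(1)] n_def using k by (simp add: algebra_simps)
  have TC: "TC2 V E = k * (4 * k + 1 - 2 * k + 1) + (d + 1) div 2"
  proof (rule TC2_eqI[OF _ P0 cP0])
    fix P assume "total_2_coalition_partition V E P"
    from part1[OF G _ _ this] show "card P \<le> k * (4 * k + 1 - 2 * k + 1) + (d + 1) div 2"
      using mn mx d k_def by simp
  qed
  show "\<exists>(V :: nat set) E. graph V E \<and> min_degree V E = d \<and>
               max_degree V E \<ge> 4 * (d div 2) - 2 \<and>
               TC2 V E = (d div 2) * (max_degree V E - 2 * (d div 2) + 1) + (d + 1) div 2"
    using G mn mx TC k_def by (intro exI[of _ V] exI[of _ E]) simp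
qed

end
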